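(* Let $X$ be a topological space, $G$ a groupoid on $X$, and let $W$ be a subgroupoid of $G$ with object set $X$ which is compatible locally trivial. Then $G$ has a topology making it a topological groupoid (with object space $X$) such that $W$ is open in $G$.
   Context: Groupoid conventions: a groupoid $G$ on object set $O_G$ has source and target maps $\alpha,\beta\colon G\rightarrow O_G$, identities $1_x$; the product $ab$ is defined iff $\beta(a)=\alpha(b)$. The star of $x$ is $G_x=\{a\in G\colon\alpha(a)=x\}$. A subgroupoid is a subset closed under products and inverses and containing the identities of its objects. A topological groupoid is a groupoid with topologies on $G$ and $O_G$ making source, target, identity map, inversion and partial multiplication continuous. Compatible locally trivial: Let $X$ be a topological space and $G$ a groupoid on $X$. Suppose $\mathcal U=\{U_i\colon i\in I\}$ is an open cover of $X$ which is also a base for its topology, and for each $i$ and each $x\in U_i$ there is a map (local section about $x$) $s_{x,i}\colon U_i\to G_x$ with $\beta(s_{x,i}(y))=y$ for $y\in U_i$ and $s_{x,i}(x)=1_x$. $G$ is compatible locally trivial if for every $x$ and any two local sections $s_{x,i}, s_{x,j}$ about $x$ there is $V_{ij}\in\mathcal U$ with $x\in V_{ij}\subseteq U_i\cap U_j$ and $s_{x,i}|_{V_{ij}}=s_{x,j}|_{V_{ij}}$. *)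

theory Defs
  imports "HOL-Analysis.Analysis"
begin

definition groupoid ::
  "'a set \<Rightarrow> 'b set \<Rightarrow> ('a \<Rightarrow> 'b) \<Rightarrow> ('a \<Rightarrow> 'b) \<Rightarrow> ('b \<Rightarrow> 'a)
   \<Rightarrow> ('a \<Rightarrow> 'a) \<Rightarrow> ('a \<Rightarrow> 'a \<Rightarrow> 'a) \<Rightarrow> bool" where
  "groupoid G X src tgt ide iv mul \<longleftrightarrow>
     (\<forall>a\<in>G. src a \<in> X \<and> tgt a \<in> X) \<and>
     (\<forall>x\<in>X. ide x \<in> G \<and> src (ide x) = x \<and> tgt (ide x) = x) \<and>
     (\<forall>a\<in>G. \<forall>b\<in>G. tgt a = src b \<longrightarrow>
        mul a b \<in> G \<and> src (mul a b) = src a \<and> tgt (mul a b) = tgt b) \<and>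
     (\<forall>a\<in>G. \<forall>b\<in>G. \<forall>c\<in>G. tgt a = src b \<and> tgt b = src c \<longrightarrow>
        mul (mul a b) c = mul a (mul b c)) \<and>
     (\<forall>a\<in>G. mul (ide (src a)) a = a \<and> mul a (ide (tgt a)) = a) \<and>
     (\<forall>a\<in>G. iv a \<in> G \<and> src (iv a) = tgt a \<and> tgt (iv a) = src a \<and>
        mul a (iv a) = ide (src a) \<and> mul (iv a) a = ide (tgt a))"

definition star :: "'a set \<Rightarrow> ('a \<Rightarrow> 'b) \<Rightarrow> 'b \<Rightarrow> 'a set" where
  "star G src x = {a \<in> G. src a = x}"

definition wide_subgroupoid ::
  "'a set \<Rightarrow> 'a set \<Rightarrow> 'b set \<Rightarrow> ('a \<Rightarrow> 'b) \<Rightarrow> ('a \<Rightarrow> 'b) \<Rightarrow> ('b \<Rightarrow> 'a)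
   \<Rightarrow> ('a \<Rightarrow> 'a) \<Rightarrow> ('a \<Rightarrow> 'a \<Rightarrow> 'a) \<Rightarrow> bool" where
  "wide_subgroupoid W G X src tgt ide iv mul \<longleftrightarrow>
     W \<subseteq> G \<and>
     (\<forall>a\<in>W. \<forall>b\<in>W. tgt a = src b \<longrightarrow> mul a b \<in> W) \<and>
     (\<forall>a\<in>W. iv a \<in> W) \<and>
     (\<forall>x\<in>X. ide x \<in> W)"

text \<open>The open cover \<U> is also a base of T; s x U is the
  chosen local section about x on U \<in> \<U> (for x \<in> U).\<close>
definition compatible_locally_trivial ::
  "'b topology \<Rightarrow> 'a set \<Rightarrow> ('a \<Rightarrow> 'b) \<Rightarrow> ('a \<Rightarrow> 'b) \<Rightarrow> ('b \<Rightarrow> 'a) \<Rightarrow> bool" where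
  "compatible_locally_trivial T W src tgt ide \<longleftrightarrow>
     (\<exists>\<U> s.
        (\<forall>U\<in>\<U>. openin T U) \<and> \<Union>\<U> = topspace T \<and>
        (\<forall>V x. openin T V \<and> x \<in> V \<longrightarrow> (\<exists>U\<in>\<U>. x \<in> U \<and> U \<subseteq> V)) \<and>
        (\<forall>U\<in>\<U>. \<forall>x\<in>U.
           (\<forall>y\<in>U. s x U y \<in> star W src x \<and> tgt (s x U y) = y) \<and> s x U x = ide x) \<and>
        (\<forall>x. \<forall>U\<in>\<U>. \<forall>U'\<in>\<U>. x \<in> U \<and> x \<in> U' \<longrightarrow>
           (\<exists>V\<in>\<U>. x \<in> V \<and> V \<subseteq> U \<inter> U' \<and> (\<forall>y\<in>V. s x U y = s x U' y))))"

definition topological_groupoid ::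
  "'a topology \<Rightarrow> 'b topology \<Rightarrow> ('a \<Rightarrow> 'b) \<Rightarrow> ('a \<Rightarrow> 'b) \<Rightarrow> ('b \<Rightarrow> 'a)
   \<Rightarrow> ('a \<Rightarrow> 'a) \<Rightarrow> ('a \<Rightarrow> 'a \<Rightarrow> 'a) \<Rightarrow> bool" where
  "topological_groupoid \<tau> T src tgt ide iv mul \<longleftrightarrow>
     groupoid (topspace \<tau>) (topspace T) src tgt ide iv mul \<and>
     continuous_map \<tau> T src \<and> continuous_map \<tau> T tgt \<and>
     continuous_map T \<tau> ide \<and> continuous_map \<tau> \<tau> iv \<and>
     continuous_map
       (subtopology (prod_topology \<tau> \<tau>)
          {(a, b). a \<in> topspace \<tau> \<and> b \<in> topspace \<tau> \<and> tgt a = src b})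
       \<tau> (\<lambda>(a, b). mul a b)"

end

theory Submission
  imports Defs
begin

locale grpd =
  fixes G :: "'a set" and X :: "'b set" and src tgt :: "'a \<Rightarrow> 'b" and ide :: "'b \<Rightarrow> 'a"
    and iv :: "'a \<Rightarrow> 'a" and mul :: "'a \<Rightarrow> 'a \<Rightarrow> 'a"
  assumes grp: "groupoid G X src tgt ide iv mul"
begin

lemma s_in[simp]: "a \<in> G \<Longrightarrow> src a \<in> X" and t_in[simp]: "a \<in> G \<Longrightarrow> tgt a \<in> X"
  using grp unfolding groupoid_def by auto
lemma ide_in[simp]: "x \<in> X \<Longrightarrow> ide x \<in> G" and ide_s[simp]: "x \<in> X \<Longrightarrow> src (ide x) = x"
  and ide_t[simp]: "x \<in> X \<Longrightarrow> tgt (ide x) = x"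
  using grp unfolding groupoid_def by auto
lemma mul_in[simp]: "a \<in> G \<Longrightarrow> b \<in> G \<Longrightarrow> tgt a = src b \<Longrightarrow> mul a b \<in> G"
  and mul_s[simp]: "a \<in> G \<Longrightarrow> b \<in> G \<Longrightarrow> tgt a = src b \<Longrightarrow> src (mul a b) = src a"
  and mul_t[simp]: "a \<in> G \<Longrightarrow> b \<in> G \<Longrightarrow> tgt a = src b \<Longrightarrow> tgt (mul a b) = tgt b"
  using grp unfolding groupoid_def by auto
lemma assoc[simp]: "a \<in> G \<Longrightarrow> b \<in> G \<Longrightarrow> c \<in> G \<Longrightarrow> tgt a = src b \<Longrightarrow> tgt b = src c \<Longrightarrow>
   mul (mul a b) c = mul a (mul b c)"
  using grp unfolding groupoid_def by auto
lemma lid[simp]: "a \<in> G \<Longrightarrow> mul (ide (src a)) a = a" and rid[simp]: "a \<in> G \<Longrightarrow> mul a (ide (tgt a)) = a"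
  using grp unfolding groupoid_def by auto
lemma iv_in[simp]: "a \<in> G \<Longrightarrow> iv a \<in> G" and iv_s[simp]: "a \<in> G \<Longrightarrow> src (iv a) = tgt a"
  and iv_t[simp]: "a \<in> G \<Longrightarrow> tgt (iv a) = src a"
  and rinv[simp]: "a \<in> G \<Longrightarrow> mul a (iv a) = ide (src a)"
  and linv[simp]: "a \<in> G \<Longrightarrow> mul (iv a) a = ide (tgt a)"
  using grp unfolding groupoid_def by auto

lemma lid'[simp]: "a \<in> G \<Longrightarrow> x = src a \<Longrightarrow> mul (ide x) a = a" by simp
lemma rid'[simp]: "a \<in> G \<Longrightarrow> x = tgt a \<Longrightarrow> mul a (ide x) = a" by simp

lemma cancel1[simp]: "a \<in> G \<Longrightarrow> b \<in> G \<Longrightarrow> tgt a = src b \<Longrightarrow> mul (iv a) (mul a b) = b"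
proof -
  assume h: "a \<in> G" "b \<in> G" "tgt a = src b"
  have "mul (iv a) (mul a b) = mul (mul (iv a) a) b" using h by (subst assoc) auto
  also have "\<dots> = b" using h by simp
  finally show ?thesis .
qed

lemma cancel2[simp]: "a \<in> G \<Longrightarrow> b \<in> G \<Longrightarrow> src a = src b \<Longrightarrow> mul a (mul (iv a) b) = b"
proof -
  assume h: "a \<in> G" "b \<in> G" "src a = src b"
  have "mul a (mul (iv a) b) = mul (mul a (iv a)) b" using h by (subst assoc) auto
  also have "\<dots> = b" using h by simp
  finally show ?thesis .
qed

lemma iv_unique: "a \<in> G \<Longrightarrow> b \<in> G \<Longrightarrow> tgt a = src b \<Longrightarrow> mul a b = ide (src a) \<Longrightarrow> b = iv a"
proof -
  assume h: "a \<in> G" "b \<in> G" "tgt a = src b" "mul a b = ide (src a)"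
  have "b = mul (iv a) (mul a b)" using h(1-3) by simp
  also have "\<dots> = mul (iv a) (ide (src a))" using h by simp
  also have "\<dots> = iv a" using h by simp
  finally show ?thesis .
qed

lemma iv_iv[simp]: "a \<in> G \<Longrightarrow> iv (iv a) = a"
  using iv_unique[of "iv a" a] by simp

lemma iv_mul: "a \<in> G \<Longrightarrow> b \<in> G \<Longrightarrow> tgt a = src b \<Longrightarrow> iv (mul a b) = mul (iv b) (iv a)"
proof -
  assume h: "a \<in> G" "b \<in> G" "tgt a = src b"
  have "mul (mul a b) (mul (iv b) (iv a)) = mul a (mul b (mul (iv b) (iv a)))" using h by simp
  also have "\<dots> = mul a (iv a)" using h by simp
  also have "\<dots> = ide (src (mul a b))" using h by simp
  finally show ?thesis using h iv_unique[of "mul a b" "mul (iv b) (iv a)"] by simp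
qed

end


locale gsetup = grpd G "topspace T" src tgt ide iv mul
  for G :: "'a set" and T :: "'b topology" and src tgt :: "'a \<Rightarrow> 'b" and ide :: "'b \<Rightarrow> 'a"
    and iv :: "'a \<Rightarrow> 'a" and mul :: "'a \<Rightarrow> 'a \<Rightarrow> 'a" +
  fixes W :: "'a set"
  assumes sub: "wide_subgroupoid W G (topspace T) src tgt ide iv mul"
    and orb: "\<forall>x\<in>topspace T. \<exists>U. openin T U \<and> x \<in> U \<and> (\<forall>y\<in>U. \<exists>w\<in>W. src w = x \<and> tgt w = y)"
begin

lemma W_G: "a \<in> W \<Longrightarrow> a \<in> G" and W_mul: "a \<in> W \<Longrightarrow> b \<in> W \<Longrightarrow> tgt a = src b \<Longrightarrow> mul a b \<in> W"
  and W_iv: "a \<in> W \<Longrightarrow> iv a \<in> W" and W_ide: "x \<in> topspace T \<Longrightarrow> ide x \<in> W"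
  using sub unfolding wide_subgroupoid_def by auto

definition R where "R y z \<longleftrightarrow> (\<exists>w\<in>W. src w = y \<and> tgt w = z)"
definition rep where "rep y = (SOME z. R z y)"
definition sig where "sig y = (SOME w. w \<in> W \<and> src w = rep y \<and> tgt w = y)"
definition cc where "cc a = mul (mul (sig (src a)) a) (iv (sig (tgt a)))"
definition nb where "nb a U V = {b\<in>G. src b \<in> U \<and> tgt b \<in> V \<and> cc b = cc a}"
definition opn where "opn S \<longleftrightarrow> S \<subseteq> G \<and> (\<forall>a\<in>S. \<exists>U V. openin T U \<and> openin T V \<and>
   src a \<in> U \<and> tgt a \<in> V \<and> nb a U V \<subseteq> S)"
definition tau where "tau = topology opn"

lemma R_refl: "y \<in> topspace T \<Longrightarrow> R y y"
  unfolding R_def using W_ide by force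
lemma R_sym: "R y z \<Longrightarrow> R z y"
  unfolding R_def using W_iv W_G by force
lemma R_trans: "R x y \<Longrightarrow> R y z \<Longrightarrow> R x z"
  unfolding R_def using W_mul W_G by (metis mul_s mul_t)
lemma R_X: "R y z \<Longrightarrow> y \<in> topspace T \<and> z \<in> topspace T"
  unfolding R_def using W_G by auto
lemma rep: "y \<in> topspace T \<Longrightarrow> R (rep y) y"
  unfolding rep_def using R_refl by (metis someI)
lemma rep_eq: "R y z \<Longrightarrow> rep y = rep z"
proof -
  assume h: "R y z"
  have "(\<lambda>u. R u y) = (\<lambda>u. R u z)" using h R_sym R_trans by (intro ext) blast
  then show ?thesis unfolding rep_def by simp
qed
lemma sig: "y \<in> topspace T \<Longrightarrow> sig y \<in> W \<and> src (sig y) = rep y \<and> tgt (sig y) = y"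
proof -
  assume "y \<in> topspace T"
  then have "\<exists>w. w \<in> W \<and> src w = rep y \<and> tgt w = y" using rep[of y] unfolding R_def by blast
  then show ?thesis unfolding sig_def by (rule someI_ex)
qed
lemma sig_G[simp]: "y \<in> topspace T \<Longrightarrow> sig y \<in> G" using sig W_G by blast
lemma sig_s[simp]: "y \<in> topspace T \<Longrightarrow> src (sig y) = rep y" using sig by blast
lemma sig_t[simp]: "y \<in> topspace T \<Longrightarrow> tgt (sig y) = y" using sig by blast

lemma cc_in[simp]: "a \<in> G \<Longrightarrow> cc a \<in> G" unfolding cc_def by simp
lemma cc_s[simp]: "a \<in> G \<Longrightarrow> src (cc a) = rep (src a)" unfolding cc_def by simp
lemma cc_t[simp]: "a \<in> G \<Longrightarrow> tgt (cc a) = rep (tgt a)" unfolding cc_def by simp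

lemma cc_inv: "a \<in> G \<Longrightarrow> a = mul (iv (sig (src a))) (mul (cc a) (sig (tgt a)))"
  unfolding cc_def by simp

lemma cc_mul: "a \<in> G \<Longrightarrow> b \<in> G \<Longrightarrow> tgt a = src b \<Longrightarrow> cc (mul a b) = mul (cc a) (cc b)"
  unfolding cc_def by simp

lemma cc_iv: "a \<in> G \<Longrightarrow> cc (iv a) = iv (cc a)"
  unfolding cc_def by (simp add: iv_mul)

lemma cc_ide: "x \<in> topspace T \<Longrightarrow> cc (ide x) = ide (rep x)"
  unfolding cc_def by simp

lemma cc_W: "a \<in> G \<Longrightarrow> a \<in> W \<longleftrightarrow> cc a \<in> W"
proof
  assume a: "a \<in> G" "a \<in> W"
  show "cc a \<in> W" unfolding cc_def using a sig[of "src a"] sig[of "tgt a"]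
    by (intro W_mul W_iv) auto
next
  assume a: "a \<in> G" "cc a \<in> W"
  have "mul (iv (sig (src a))) (mul (cc a) (sig (tgt a))) \<in> W"
    using a sig[of "src a"] sig[of "tgt a"] by (intro W_mul W_iv) auto
  then show "a \<in> W" using cc_inv a by simp
qed

lemma nb_mono: "U \<subseteq> U' \<Longrightarrow> V \<subseteq> V' \<Longrightarrow> nb a U V \<subseteq> nb a U' V'"
  unfolding nb_def by blast

lemma istop: "istopology opn"
  unfolding istopology_def
proof (intro conjI allI impI)
  fix S S' assume h: "opn S" "opn S'"
  show "opn (S \<inter> S')" unfolding opn_def
  proof (intro conjI ballI)
    show "S \<inter> S' \<subseteq> G" using h unfolding opn_def by blast
    fix a assume a: "a \<in> S \<inter> S'"
    obtain U V where 1: "openin T U" "openin T V" "src a \<in> U" "tgt a \<in> V" "nb a U V \<subseteq> S"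
      using h(1) a unfolding opn_def by blast
    obtain U' V' where 2: "openin T U'" "openin T V'" "src a \<in> U'" "tgt a \<in> V'" "nb a U' V' \<subseteq> S'"
      using h(2) a unfolding opn_def by blast
    have "nb a (U \<inter> U') (V \<inter> V') \<subseteq> nb a U V" "nb a (U \<inter> U') (V \<inter> V') \<subseteq> nb a U' V'"
      by (rule nb_mono; blast)+
    then have "nb a (U \<inter> U') (V \<inter> V') \<subseteq> S \<inter> S'" using 1(5) 2(5) by blast
    moreover have "openin T (U \<inter> U')" "openin T (V \<inter> V')" using 1 2 by auto
    moreover have "src a \<in> U \<inter> U'" "tgt a \<in> V \<inter> V'" using 1 2 by auto
    ultimately show "\<exists>U V. openin T U \<and> openin T V \<and> src a \<in> U \<and> tgt a \<in> V \<and> nb a U V \<subseteq> S \<inter> S'"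
      by blast
  qed
next
  fix K assume h: "\<forall>S\<in>K. opn S"
  show "opn (\<Union>K)" unfolding opn_def
  proof (intro conjI ballI)
    show "\<Union>K \<subseteq> G" using h unfolding opn_def by blast
    fix a assume "a \<in> \<Union>K"
    then obtain S where S: "S \<in> K" "a \<in> S" by blast
    then have "opn S" using h by blast
    then obtain U V where 1: "openin T U" "openin T V" "src a \<in> U" "tgt a \<in> V" "nb a U V \<subseteq> S"
      using S(2) unfolding opn_def by blast
    have "nb a U V \<subseteq> \<Union>K" using 1(5) S(1) by blast
    then show "\<exists>U V. openin T U \<and> openin T V \<and> src a \<in> U \<and> tgt a \<in> V \<and> nb a U V \<subseteq> \<Union>K"
      using 1 by blast
  qed
qed

lemma openin_tau: "openin tau = opn"
  unfolding tau_def using istop by simp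

lemma opn_G: "opn G"
  unfolding opn_def nb_def by (intro conjI ballI exI[of _ "topspace T"]) auto

lemma topspace_tau: "topspace tau = G"
  unfolding topspace_def openin_tau using opn_G unfolding opn_def by blast

lemma cont_src: "continuous_map tau T src"
  unfolding continuous_map_def topspace_tau openin_tau
proof (intro conjI allI impI)
  show "src \<in> G \<rightarrow> topspace T" by auto
  fix U assume U: "openin T U"
  show "opn {x \<in> G. src x \<in> U}" unfolding opn_def
  proof (intro conjI ballI)
    fix a assume a: "a \<in> {x \<in> G. src x \<in> U}"
    show "\<exists>U' V. openin T U' \<and> openin T V \<and> src a \<in> U' \<and> tgt a \<in> V \<and> nb a U' V \<subseteq> {x \<in> G. src x \<in> U}"
      using U a unfolding nb_def by (intro exI[of _ U] exI[of _ "topspace T"]) auto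
  qed auto
qed

lemma cont_tgt: "continuous_map tau T tgt"
  unfolding continuous_map_def topspace_tau openin_tau
proof (intro conjI allI impI)
  show "tgt \<in> G \<rightarrow> topspace T" by auto
  fix U assume U: "openin T U"
  show "opn {x \<in> G. tgt x \<in> U}" unfolding opn_def
  proof (intro conjI ballI)
    fix a assume a: "a \<in> {x \<in> G. tgt x \<in> U}"
    show "\<exists>U' V. openin T U' \<and> openin T V \<and> src a \<in> U' \<and> tgt a \<in> V \<and> nb a U' V \<subseteq> {x \<in> G. tgt x \<in> U}"
      using U a unfolding nb_def by (intro exI[of _ "topspace T"] exI[of _ U]) auto
  qed auto
qed

lemma cont_ide: "continuous_map T tau ide"
  unfolding continuous_map_def topspace_tau openin_tau
proof (intro conjI allI impI)
  show "ide \<in> topspace T \<rightarrow> G" by auto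
  fix S assume S: "opn S"
  show "openin T {x \<in> topspace T. ide x \<in> S}"
  proof (subst openin_subopen, intro ballI)
    fix x assume x: "x \<in> {x \<in> topspace T. ide x \<in> S}"
    obtain U V where 1: "openin T U" "openin T V" "x \<in> U" "x \<in> V" "nb (ide x) U V \<subseteq> S"
      using S x unfolding opn_def by force
    obtain Ob where Ob: "openin T Ob" "x \<in> Ob" "\<forall>y\<in>Ob. \<exists>w\<in>W. src w = x \<and> tgt w = y"
      using orb x by blast
    have "U \<inter> V \<inter> Ob \<subseteq> {x \<in> topspace T. ide x \<in> S}"
    proof
      fix y assume y: "y \<in> U \<inter> V \<inter> Ob"
      then have yX: "y \<in> topspace T" using Ob openin_subset by blast
      have "R x y" using Ob y unfolding R_def by blast
      then have "rep y = rep x" using rep_eq by simp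
      then have "ide y \<in> nb (ide x) U V" using y yX x unfolding nb_def by (simp add: cc_ide)
      then show "y \<in> {x \<in> topspace T. ide x \<in> S}" using 1 yX by blast
    qed
    then show "\<exists>T'. openin T T' \<and> x \<in> T' \<and> T' \<subseteq> {x \<in> topspace T. ide x \<in> S}"
      using 1 Ob by (intro exI[of _ "U \<inter> V \<inter> Ob"]) auto
  qed
qed

lemma cont_iv: "continuous_map tau tau iv"
  unfolding continuous_map_def topspace_tau openin_tau
proof (intro conjI allI impI)
  show "iv \<in> G \<rightarrow> G" by auto
  fix S assume S: "opn S"
  show "opn {x \<in> G. iv x \<in> S}" unfolding opn_def
  proof (intro conjI ballI)
    fix a assume a: "a \<in> {x \<in> G. iv x \<in> S}"
    obtain U V where 1: "openin T U" "openin T V" "tgt a \<in> U" "src a \<in> V" "nb (iv a) U V \<subseteq> S"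
      using S a unfolding opn_def by force
    have "nb a V U \<subseteq> {x \<in> G. iv x \<in> S}"
    proof
      fix b assume b: "b \<in> nb a V U"
      then have "iv b \<in> nb (iv a) U V" using a unfolding nb_def by (auto simp: cc_iv)
      then show "b \<in> {x \<in> G. iv x \<in> S}" using 1 b unfolding nb_def by blast
    qed
    then show "\<exists>U V. openin T U \<and> openin T V \<and> src a \<in> U \<and> tgt a \<in> V \<and> nb a U V \<subseteq> {x \<in> G. iv x \<in> S}"
      using 1 by blast
  qed auto
qed

lemma opn_W: "opn W"
  unfolding opn_def
proof (intro conjI ballI)
  show "W \<subseteq> G" using W_G by blast
  fix a assume a: "a \<in> W"
  have "nb a (topspace T) (topspace T) \<subseteq> W"
  proof
    fix b assume b: "b \<in> nb a (topspace T) (topspace T)"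
    then have "b \<in> G" "cc b = cc a" unfolding nb_def by auto
    moreover have "cc a \<in> W" using a W_G[OF a] cc_W by blast
    ultimately show "b \<in> W" using cc_W by metis
  qed
  then show "\<exists>U V. openin T U \<and> openin T V \<and> src a \<in> U \<and> tgt a \<in> V \<and> nb a U V \<subseteq> W"
    using a W_G by (intro exI[of _ "topspace T"] exI[of _ "topspace T"]) auto
qed

lemma opn_N1: "opn {a' \<in> G. src a' \<in> U \<and> cc a' = c}" if "openin T U"
  unfolding opn_def
proof (intro conjI ballI)
  fix a assume a: "a \<in> {a' \<in> G. src a' \<in> U \<and> cc a' = c}"
  have "nb a U (topspace T) \<subseteq> {a' \<in> G. src a' \<in> U \<and> cc a' = c}"
    using a unfolding nb_def by auto
  then show "\<exists>U' V. openin T U' \<and> openin T V \<and> src a \<in> U' \<and> tgt a \<in> V \<and> nb a U' V \<subseteq> {a' \<in> G. src a' \<in> U \<and> cc a' = c}"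
    using a that by (intro exI[of _ U] exI[of _ "topspace T"]) auto
qed auto

lemma opn_N2: "opn {a' \<in> G. tgt a' \<in> V \<and> cc a' = c}" if "openin T V"
  unfolding opn_def
proof (intro conjI ballI)
  fix a assume a: "a \<in> {a' \<in> G. tgt a' \<in> V \<and> cc a' = c}"
  have "nb a (topspace T) V \<subseteq> {a' \<in> G. tgt a' \<in> V \<and> cc a' = c}"
    using a unfolding nb_def by auto
  then show "\<exists>U' V'. openin T U' \<and> openin T V' \<and> src a \<in> U' \<and> tgt a \<in> V' \<and> nb a U' V' \<subseteq> {a' \<in> G. tgt a' \<in> V \<and> cc a' = c}"
    using a that by (intro exI[of _ "topspace T"] exI[of _ V]) auto
qed auto

lemma cont_mul: "continuous_map
       (subtopology (prod_topology tau tau)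
          {(a, b). a \<in> topspace tau \<and> b \<in> topspace tau \<and> tgt a = src b})
       tau (\<lambda>(a, b). mul a b)"
  (is "continuous_map (subtopology _ ?C) _ _")
proof -
  have C: "?C = {(a, b). a \<in> G \<and> b \<in> G \<and> tgt a = src b}" by (simp add: topspace_tau)
  show ?thesis
  unfolding continuous_map_def
  proof (intro conjI allI impI)
    show "(\<lambda>(a, b). mul a b) \<in> topspace (subtopology (prod_topology tau tau) ?C) \<rightarrow> topspace tau"
      unfolding C topspace_subtopology topspace_prod_topology topspace_tau by auto
    fix S assume S0: "openin tau S"
    then have S: "opn S" by (simp add: openin_tau)
    let ?P = "{x \<in> topspace (subtopology (prod_topology tau tau) ?C). (\<lambda>(a, b). mul a b) x \<in> S}"
    show "openin (subtopology (prod_topology tau tau) ?C) ?P"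
    proof (subst openin_subopen, intro ballI)
      fix x assume x: "x \<in> ?P"
      obtain a b where ab: "x = (a, b)" by (cases x)
      have abG: "a \<in> G" "b \<in> G" "tgt a = src b" "mul a b \<in> S"
        using x unfolding ab C topspace_subtopology topspace_prod_topology topspace_tau by auto
      obtain U V where 1: "openin T U" "openin T V" "src a \<in> U" "tgt b \<in> V" "nb (mul a b) U V \<subseteq> S"
        using S abG unfolding opn_def by force
      define N1 where "N1 = {a' \<in> G. src a' \<in> U \<and> cc a' = cc a}"
      define N2 where "N2 = {a' \<in> G. tgt a' \<in> V \<and> cc a' = cc b}"
      have o: "openin (prod_topology tau tau) (N1 \<times> N2)"
        unfolding openin_prod_Times_iff openin_tau N1_def N2_def using opn_N1 opn_N2 1 by blast
      then have o2: "openin (subtopology (prod_topology tau tau) ?C) ((N1 \<times> N2) \<inter> ?C)"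
        by (rule openin_subtopology_Int)
      have sub: "(N1 \<times> N2) \<inter> ?C \<subseteq> ?P"
      proof
        fix y assume y: "y \<in> (N1 \<times> N2) \<inter> ?C"
        obtain a' b' where ab': "y = (a', b')" by (cases y)
        have h: "a' \<in> G" "b' \<in> G" "tgt a' = src b'" "src a' \<in> U" "tgt b' \<in> V" "cc a' = cc a" "cc b' = cc b"
          using y unfolding ab' C N1_def N2_def by auto
        have "cc (mul a' b') = cc (mul a b)" using h abG by (simp add: cc_mul)
        then have "mul a' b' \<in> nb (mul a b) U V" using h unfolding nb_def by simp
        then have "mul a' b' \<in> S" using 1(5) by blast
        then show "y \<in> ?P" using h unfolding ab' C topspace_subtopology topspace_prod_topology topspace_tau by auto
      qed
      have "x \<in> (N1 \<times> N2) \<inter> ?C" using abG 1 unfolding ab C N1_def N2_def by auto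
      then show "\<exists>T'. openin (subtopology (prod_topology tau tau) ?C) T' \<and> x \<in> T' \<and> T' \<subseteq> ?P"
        using o2 sub by blast
    qed
  qed
qed

lemma result: "\<exists>\<tau> :: 'a topology. topspace \<tau> = G \<and>
           topological_groupoid \<tau> T src tgt ide iv mul \<and> openin \<tau> W"
proof (intro exI[of _ tau] conjI)
  show "topspace tau = G" by (rule topspace_tau)
  show "openin tau W" using opn_W by (simp add: openin_tau)
  show "topological_groupoid tau T src tgt ide iv mul"
    unfolding topological_groupoid_def
    using grp cont_src cont_tgt cont_ide cont_iv cont_mul by (simp only: topspace_tau) 
qed

end

theorem mainTheorem4:
  fixes T :: "'b topology" and G W :: "'a set"
    and src tgt :: "'a \<Rightarrow> 'b" and ide :: "'b \<Rightarrow> 'a"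
    and iv :: "'a \<Rightarrow> 'a" and mul :: "'a \<Rightarrow> 'a \<Rightarrow> 'a"
  assumes "groupoid G (topspace T) src tgt ide iv mul"
    and "wide_subgroupoid W G (topspace T) src tgt ide iv mul"
    and "compatible_locally_trivial T W src tgt ide"
  shows "\<exists>\<tau> :: 'a topology. topspace \<tau> = G \<and>
           topological_groupoid \<tau> T src tgt ide iv mul \<and> openin \<tau> W"
proof -
  obtain \<U> s where U1: "\<forall>U\<in>\<U>. openin T U" and U2: "\<Union>\<U> = topspace T"
    and U3: "\<forall>U\<in>\<U>. \<forall>x\<in>U. (\<forall>y\<in>U. s x U y \<in> star W src x \<and> tgt (s x U y) = y) \<and> s x U x = ide x"
    using assms(3) unfolding compatible_locally_trivial_def by (elim exE conjE) (rule that; assumption)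
  have orb: "\<forall>x\<in>topspace T. \<exists>U. openin T U \<and> x \<in> U \<and> (\<forall>y\<in>U. \<exists>w\<in>W. src w = x \<and> tgt w = y)"
  proof
    fix x assume "x \<in> topspace T"
    then obtain U where U: "U \<in> \<U>" "x \<in> U" using U2 by blast
    have "\<forall>y\<in>U. \<exists>w\<in>W. src w = x \<and> tgt w = y"
    proof
      fix y assume y: "y \<in> U"
      have "s x U y \<in> star W src x \<and> tgt (s x U y) = y" using U3 U y by blast
      then show "\<exists>w\<in>W. src w = x \<and> tgt w = y" unfolding star_def by blast
    qed
    then show "\<exists>U. openin T U \<and> x \<in> U \<and> (\<forall>y\<in>U. \<exists>w\<in>W. src w = x \<and> tgt w = y)"
      using U U1 by blast
  qed
  interpret gsetup G T src tgt ide iv mul W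
    by (rule gsetup.intro[OF grpd.intro[OF assms(1)] gsetup_axioms.intro[OF assms(2) orb]])
  show ?thesis by (rule result)
qed

end
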